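(* Let $A,B\in\Gamma(3)$. Then $\Gamma_\infty(3)\cdot A=\Gamma_\infty(3)\cdot B$ if and only if $Inv(A)=Inv(B)$.
   Context: Let $\omega=e^{2\pi i/3}$ and $\mathfrak{o}=\mathbb{Z}[\omega]$. $\Gamma(3)=\{A\in SL_3(\mathfrak{o}) : A\equiv I_3 \pmod{3\mathfrak{o}}\}$ (congruence entrywise), and $\Gamma_\infty(3)$ is the subgroup of upper triangular unipotent matrices in $\Gamma(3)$. For $A=\begin{pmatrix} a&b&c\\ d&e&f\\ g&h&i\end{pmatrix}$, $Inv(A)=(g,\,h,\,i,\,dh-eg,\,di-fg,\,ei-fh)\in\mathfrak{o}^6$, i.e. the bottom row of $A$ followed by the bottom row of the matrix $\Lambda^2(A)=\begin{pmatrix} ae-bd & af-cd & bf-ec\\ ah-bg & ai-cg & bi-hc\\ dh-eg & di-fg & ei-fh\end{pmatrix}$. *)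

theory Defs
  imports "HOL-Analysis.Analysis"
begin

definition omega :: complex where
  "omega = exp (2 * of_real pi * \<i> / 3)"

definition Eis :: "complex set" where
  "Eis = {of_int a + of_int b * omega | a b. True}"

definition cong3 :: "complex \<Rightarrow> complex \<Rightarrow> bool" where
  "cong3 x y \<longleftrightarrow> (\<exists>z\<in>Eis. x - y = 3 * z)"

definition Gamma3 :: "(complex^3^3) set" where
  "Gamma3 = {A. (\<forall>i j. A $ i $ j \<in> Eis) \<and> det A = 1 \<and>
                (\<forall>i j. cong3 (A $ i $ j) (mat 1 $ i $ j))}"

definition Gamma_inf3 :: "(complex^3^3) set" where
  "Gamma_inf3 = {N \<in> Gamma3. N $ 1 $ 1 = 1 \<and> N $ 2 $ 2 = 1 \<and> N $ 3 $ 3 = 1 \<and>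
                   N $ 2 $ 1 = 0 \<and> N $ 3 $ 1 = 0 \<and> N $ 3 $ 2 = 0}"

definition orbit3 :: "complex^3^3 \<Rightarrow> (complex^3^3) set" where
  "orbit3 A = (\<lambda>N. N ** A) ` Gamma_inf3"

definition Inv :: "complex^3^3 \<Rightarrow> complex \<times> complex \<times> complex \<times> complex \<times> complex \<times> complex" where
  "Inv A = (let d = A$2$1; e = A$2$2; f = A$2$3; g = A$3$1; h = A$3$2; i = A$3$3
            in (g, h, i, d*h - e*g, d*i - f*g, e*i - f*h))"

end

theory Submission
  imports Defs
begin

lemma omega_sq: "omega^2 = -1 - omega"
proof -
  have c: "omega^3 = 1"
    proof -
    have "of_nat 3 * (2 * of_real pi * \<i> / 3) = 2 * of_real pi * \<i>" by simp
    thus ?thesis unfolding omega_def by (metis exp_of_nat_mult exp_two_pi_i)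
  qed
  have "Re omega = -1/2"
    unfolding omega_def by (simp add: Re_exp cos_120)
  hence ne: "omega \<noteq> 1" by auto
  have "(omega - 1) * (omega^2 + omega + 1) = 0"
    using c by (simp add: algebra_simps power3_eq_cube power2_eq_square)
  with ne have "omega^2 + omega + 1 = 0" by simp
  thus ?thesis by (simp add: algebra_simps eq_neg_iff_add_eq_0)
qed

lemma Eis_0[simp]: "0 \<in> Eis"
  unfolding Eis_def by (rule CollectI, rule exI[of _ 0], rule exI[of _ 0]) simp

lemma Eis_1[simp]: "1 \<in> Eis"
  unfolding Eis_def by (rule CollectI, rule exI[of _ 1], rule exI[of _ 0]) simp

lemma Eis_add[simp]: "x \<in> Eis \<Longrightarrow> y \<in> Eis \<Longrightarrow> x + y \<in> Eis"
  unfolding Eis_def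
proof (clarify)
  fix a b c d :: int
  show "\<exists>a' b'. of_int a + of_int b * omega + (of_int c + of_int d * omega) = of_int a' + of_int b' * omega \<and> True"
    by (rule exI[of _ "a+c"], rule exI[of _ "b+d"]) (simp add: algebra_simps)
qed

lemma Eis_uminus[simp]: "x \<in> Eis \<Longrightarrow> - x \<in> Eis"
  unfolding Eis_def
proof (clarify)
  fix a b :: int
  show "\<exists>a' b'. - (of_int a + of_int b * omega) = of_int a' + of_int b' * omega \<and> True"
    by (rule exI[of _ "-a"], rule exI[of _ "-b"]) (simp add: algebra_simps)
qed

lemma Eis_diff[simp]: "x \<in> Eis \<Longrightarrow> y \<in> Eis \<Longrightarrow> x - y \<in> Eis"
  using Eis_add[of x "-y"] by simp

lemma Eis_mult[simp]: "x \<in> Eis \<Longrightarrow> y \<in> Eis \<Longrightarrow> x * y \<in> Eis"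
  unfolding Eis_def
proof (clarify)
  fix a b c d :: int
  have "(of_int a + of_int b * omega) * (of_int c + of_int d * omega)
      = of_int a * of_int c + (of_int a * of_int d + of_int b * of_int c) * omega + of_int b * of_int d * omega^2"
    by (simp add: algebra_simps power2_eq_square)
  also have "\<dots> = of_int (a*c - b*d) + of_int (a*d + b*c - b*d) * omega"
    by (simp add: omega_sq algebra_simps)
  finally show "\<exists>a' b'. (of_int a + of_int b * omega) * (of_int c + of_int d * omega) = of_int a' + of_int b' * omega \<and> True"
    by blast
qed

lemma Eis_3[simp]: "3 \<in> Eis"
  using Eis_add[OF Eis_1 Eis_add[OF Eis_1 Eis_1]] by (simp add: numeral_3_eq_3)

lemma Eis_sum: "(\<And>x. x \<in> S \<Longrightarrow> f x \<in> Eis) \<Longrightarrow> sum f S \<in> Eis"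
  by (induction S rule: infinite_finite_induct) auto

definition D3 :: "complex set" where "D3 = {3 * z | z. z \<in> Eis}"

lemma D3_Eis: "x \<in> D3 \<Longrightarrow> x \<in> Eis" unfolding D3_def by auto
lemma D3_0[simp]: "0 \<in> D3" unfolding D3_def by force
lemma D3_add[simp]: "x \<in> D3 \<Longrightarrow> y \<in> D3 \<Longrightarrow> x + y \<in> D3"
  unfolding D3_def by clarify (metis Eis_add distrib_left)
lemma D3_diff[simp]: "x \<in> D3 \<Longrightarrow> y \<in> D3 \<Longrightarrow> x - y \<in> D3"
  unfolding D3_def by clarify (metis Eis_diff right_diff_distrib)
lemma D3_multL[simp]: "x \<in> D3 \<Longrightarrow> y \<in> Eis \<Longrightarrow> x * y \<in> D3"
  unfolding D3_def by clarify (metis Eis_mult mult.assoc)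
lemma D3_sum: "(\<And>x. x \<in> S \<Longrightarrow> f x \<in> D3) \<Longrightarrow> sum f S \<in> D3"
  by (induction S rule: infinite_finite_induct) auto

lemma cong3_D3: "cong3 x y \<longleftrightarrow> x - y \<in> D3"
  unfolding cong3_def D3_def by auto

definition EisM :: "complex^3^3 \<Rightarrow> bool" where "EisM X \<longleftrightarrow> (\<forall>i j. X$i$j \<in> Eis)"
definition D3M :: "complex^3^3 \<Rightarrow> bool" where "D3M X \<longleftrightarrow> (\<forall>i j. X$i$j \<in> D3)"

lemma EisM_mult: "EisM X \<Longrightarrow> EisM Y \<Longrightarrow> EisM (X ** Y)"
  unfolding EisM_def matrix_matrix_mult_def by (auto intro!: Eis_sum)

lemma D3M_mult: "D3M X \<Longrightarrow> EisM Y \<Longrightarrow> D3M (X ** Y)"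
  unfolding EisM_def D3M_def matrix_matrix_mult_def by (auto intro!: D3_sum)

lemma D3M_diff: "D3M X \<Longrightarrow> D3M Y \<Longrightarrow> D3M (X - Y)"
  unfolding D3M_def by auto

lemma D3M_add: "D3M X \<Longrightarrow> D3M Y \<Longrightarrow> D3M (X + Y)"
  unfolding D3M_def by auto

lemma Gamma3_iff: "A \<in> Gamma3 \<longleftrightarrow> EisM A \<and> det A = 1 \<and> D3M (A - mat 1)"
  unfolding Gamma3_def EisM_def D3M_def cong3_D3 by auto


lemma Gamma_inf3_iff: "N \<in> Gamma_inf3 \<longleftrightarrow> N \<in> Gamma3 \<and> N $ 1 $ 1 = 1 \<and> N $ 2 $ 2 = 1 \<and> N $ 3 $ 3 = 1 \<and>
                   N $ 2 $ 1 = 0 \<and> N $ 3 $ 1 = 0 \<and> N $ 3 $ 2 = 0"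
  unfolding Gamma_inf3_def by auto

lemma mat1_Gamma3: "mat 1 \<in> Gamma3"
  unfolding Gamma3_iff EisM_def D3M_def by (auto simp: mat_def det_I[unfolded mat_def])

lemma matrix_diff_rdistrib: "((A::complex^3^3) - B) ** C = A ** C - B ** C"
  by (simp add: vec_eq_iff matrix_matrix_mult_def sum_subtractf algebra_simps)

lemma mat1_Gamma_inf3: "mat 1 \<in> Gamma_inf3"
  unfolding Gamma_inf3_iff using mat1_Gamma3 by (simp add: mat_def)

lemma Gamma3_mult: assumes "N \<in> Gamma3" "M \<in> Gamma3" shows "N ** M \<in> Gamma3"
proof -
  have e: "EisM N" "EisM M" "D3M (N - mat 1)" "D3M (M - mat 1)" "det N = 1" "det M = 1"
    using assms unfolding Gamma3_iff by auto
  have eq: "N ** M - mat 1 = (N - mat 1) ** M + (M - mat 1)"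
    by (simp add: matrix_diff_rdistrib matrix_mul_lid)
  have "D3M ((N - mat 1) ** M + (M - mat 1))"
    using e by (intro D3M_add D3M_mult) auto
  hence d: "D3M (N ** M - mat 1)" unfolding eq .
  show ?thesis unfolding Gamma3_iff using e d EisM_mult[OF e(1,2)] det_mul[of N M] by simp
qed

lemma Gamma_inf3_mult: assumes "N \<in> Gamma_inf3" "M \<in> Gamma_inf3" shows "N ** M \<in> Gamma_inf3"
  using assms Gamma3_mult unfolding Gamma_inf3_iff
  by (simp add: matrix_matrix_mult_def sum_3)


lemma Inv_mult: assumes "N \<in> Gamma_inf3" shows "Inv (N ** A) = Inv A"
  using assms unfolding Gamma_inf3_iff
  by (simp add: Inv_def Let_def matrix_matrix_mult_def sum_3 algebra_simps)

definition adj3 :: "complex^3^3 \<Rightarrow> complex^3^3" where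
  "adj3 A = (let a = A$1$1; b = A$1$2; c = A$1$3; d = A$2$1; e = A$2$2; f = A$2$3;
       g = A$3$1; h = A$3$2; i = A$3$3 in
     vector [vector [e*i-f*h, c*h-b*i, b*f-c*e],
             vector [f*g-d*i, a*i-c*g, c*d-a*f],
             vector [d*h-e*g, b*g-a*h, a*e-b*d]])"

lemma adj3_left: "det A = 1 \<Longrightarrow> adj3 A ** A = mat 1"
  by (simp add: adj3_def Let_def vec_eq_iff forall_3 matrix_matrix_mult_def sum_3 det_3 mat_def
      vector_3 algebra_simps)

lemma adj3_right: "det A = 1 \<Longrightarrow> A ** adj3 A = mat 1"
  by (simp add: adj3_def Let_def vec_eq_iff forall_3 matrix_matrix_mult_def sum_3 det_3 mat_def
      vector_3 algebra_simps)

lemma adj3_Eis: "EisM A \<Longrightarrow> EisM (adj3 A)"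
  unfolding EisM_def
  by (simp add: adj3_def Let_def forall_3 vector_3)


lemma exN: assumes A: "A \<in> Gamma3" and B: "B \<in> Gamma3" and I: "Inv A = Inv B"
  shows "\<exists>N\<in>Gamma_inf3. B = N ** A"
proof -
  have eA: "EisM A" "det A = 1" "D3M (A - mat 1)" using A unfolding Gamma3_iff by auto
  have eB: "EisM B" "det B = 1" "D3M (B - mat 1)" using B unfolding Gamma3_iff by auto
  define C where "C = adj3 A"
  define N where "N = B ** C"
  have CA: "C ** A = mat 1" unfolding C_def using adj3_left eA by simp
  have AC: "A ** C = mat 1" unfolding C_def using adj3_right eA by simp
  have EC: "EisM C" unfolding C_def using adj3_Eis eA by simp
  have NA: "N ** A = B" unfolding N_def by (simp add: matrix_mul_assoc[symmetric] CA matrix_mul_rid)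
  have EN: "EisM N" unfolding N_def using EisM_mult eB EC by simp
  have "det N * det A = det B" using NA det_mul[of N A] by simp
  hence dN: "det N = 1" using eA eB by simp
  have eq: "N - mat 1 = ((B - mat 1) - (A - mat 1)) ** C"
    unfolding N_def by (simp add: matrix_diff_rdistrib AC)
  have "D3M (((B - mat 1) - (A - mat 1)) ** C)"
    by (intro D3M_mult D3M_diff eA eB EC)
  hence DN: "D3M (N - mat 1)" unfolding eq .
  have NG: "N \<in> Gamma3" unfolding Gamma3_iff using EN dN DN by simp
  have i: "A$3$1 = B$3$1" "A$3$2 = B$3$2" "A$3$3 = B$3$3"
     "A$2$1 * A$3$2 - A$2$2 * A$3$1 = B$2$1 * B$3$2 - B$2$2 * B$3$1"
     "A$2$1 * A$3$3 - A$2$3 * A$3$1 = B$2$1 * B$3$3 - B$2$3 * B$3$1"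
     "A$2$2 * A$3$3 - A$2$3 * A$3$2 = B$2$2 * B$3$3 - B$2$3 * B$3$2"
    using I unfolding Inv_def Let_def by auto
  have dA: "det A = 1" and dB: "det B = 1" using eA eB by auto
  note dA' = dA[unfolded det_3] and dB' = dB[unfolded det_3]
  define a11 where "a11 = A$1$1"
  define a12 where "a12 = A$1$2"
  define a13 where "a13 = A$1$3"
  define a21 where "a21 = A$2$1"
  define a22 where "a22 = A$2$2"
  define a23 where "a23 = A$2$3"
  define b11 where "b11 = B$1$1"
  define b12 where "b12 = B$1$2"
  define b13 where "b13 = B$1$3"
  define b21 where "b21 = B$2$1"
  define b22 where "b22 = B$2$2"
  define b23 where "b23 = B$2$3"
  define b31 where "b31 = B$3$1"
  define b32 where "b32 = B$3$2"
  define b33 where "b33 = B$3$3"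
  note vdefs = a11_def[symmetric] a12_def[symmetric] a13_def[symmetric] a21_def[symmetric] a22_def[symmetric] a23_def[symmetric] i(1)[unfolded b31_def[symmetric]] i(2)[unfolded b32_def[symmetric]] i(3)[unfolded b33_def[symmetric]] b11_def[symmetric] b12_def[symmetric] b13_def[symmetric] b21_def[symmetric] b22_def[symmetric] b23_def[symmetric] b31_def[symmetric] b32_def[symmetric] b33_def[symmetric]
  have n0: "N$1$1 = 1" unfolding N_def C_def
    apply (simp add: adj3_def Let_def matrix_matrix_mult_def sum_3 vector_3)
    using i(4-6) dA' dB' unfolding vdefs by (algebra | (simp add: algebra_simps; fail))
  have n1: "N$2$2 = 1" unfolding N_def C_def
    apply (simp add: adj3_def Let_def matrix_matrix_mult_def sum_3 vector_3)
    using i(4-6) dA' dB' unfolding vdefs by (algebra | (simp add: algebra_simps; fail))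
  have n2: "N$3$3 = 1" unfolding N_def C_def
    apply (simp add: adj3_def Let_def matrix_matrix_mult_def sum_3 vector_3)
    using i(4-6) dA' dB' unfolding vdefs by (algebra | (simp add: algebra_simps; fail))
  have n3: "N$2$1 = 0" unfolding N_def C_def
    apply (simp add: adj3_def Let_def matrix_matrix_mult_def sum_3 vector_3)
    using i(4-6) dA' dB' unfolding vdefs by (algebra | (simp add: algebra_simps; fail))
  have n4: "N$3$1 = 0" unfolding N_def C_def
    apply (simp add: adj3_def Let_def matrix_matrix_mult_def sum_3 vector_3)
    using i(4-6) dA' dB' unfolding vdefs by (algebra | (simp add: algebra_simps; fail))
  have n5: "N$3$2 = 0" unfolding N_def C_def
    apply (simp add: adj3_def Let_def matrix_matrix_mult_def sum_3 vector_3)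
    using i(4-6) dA' dB' unfolding vdefs by (algebra | (simp add: algebra_simps; fail))
  note n = n0 n1 n2 n3 n4 n5
  have "N \<in> Gamma_inf3" unfolding Gamma_inf3_iff using NG n by simp
  thus ?thesis using NA by metis
qed


lemma orbit_sub: assumes "N \<in> Gamma_inf3" "B = N ** A" shows "orbit3 B \<subseteq> orbit3 A"
proof
  fix X assume "X \<in> orbit3 B"
  then obtain M where M: "M \<in> Gamma_inf3" "X = M ** B" unfolding orbit3_def by auto
  hence "X = (M ** N) ** A" using assms by (simp add: matrix_mul_assoc)
  moreover have "M ** N \<in> Gamma_inf3" using M assms Gamma_inf3_mult by auto
  ultimately show "X \<in> orbit3 A" unfolding orbit3_def by auto
qed

theorem theorem2p7:
  assumes "A \<in> Gamma3" and "B \<in> Gamma3"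
  shows "orbit3 A = orbit3 B \<longleftrightarrow> Inv A = Inv B"
proof
  assume "orbit3 A = orbit3 B"
  moreover have "B \<in> orbit3 B" unfolding orbit3_def using mat1_Gamma_inf3
    by (metis image_eqI matrix_mul_lid)
  ultimately obtain N where "N \<in> Gamma_inf3" "B = N ** A" unfolding orbit3_def by auto
  thus "Inv A = Inv B" using Inv_mult by simp
next
  assume I: "Inv A = Inv B"
  obtain N where N: "N \<in> Gamma_inf3" "B = N ** A" using exN[OF assms I] by auto
  obtain M where M: "M \<in> Gamma_inf3" "A = M ** B" using exN[OF assms(2,1) I[symmetric]] by auto
  show "orbit3 A = orbit3 B" using orbit_sub[OF N] orbit_sub[OF M] by auto
qed

end
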